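(* Assume Hypothesis 1 (stated in the context). Then $\mathrm{soc}(X/K)\ne\mathrm{Alt}_m$.
   Context: $H(m,2)$: vertex set $\mathbb F_2^m$, coordinates indexed by a set $M$, $|M|=m$; $d$ Hamming distance. For a code $C$: covering radius $\rho$, $C_i=\{\alpha:d(\alpha,C)=i\}$. $\mathrm{Aut}(H(m,2))=B\rtimes L$, $B\cong\mathbb Z_2^m$ translations, $L\cong\mathrm{Sym}(M)$; $\mathrm{Aut}(C)$ is the setwise stabiliser of $C$; $C$ is completely transitive if $\mathrm{Aut}(C)$ is transitive on each of $C,C_1,\dots,C_\rho$. For a linear code $D$, $T_D$ is the group of translations by elements of $D$. For $C\ni\mathbf 0$, the maximal linear subcode $C_{\max}$ is the largest linear subcode $D\subseteq C$ with $T_D\le\mathrm{Aut}(C)$. Hypothesis 1: $C$ is a completely transitive code in $H(m,2)$ with $\mathbf 0\in C$ and minimum distance $\delta\ge5$; $X=\mathrm{Aut}(C)$; $C_{\max}$ the maximal linear subcode; $X_{\max}$ the setwise stabiliser of $C_{\max}$ in $X$; $2\le\dim C_{\max}\le m-2$. $K=X\cap B$ is the kernel of the action of $X$ on $M$, so $X/K$ is regarded as a permutation group on $M$; $\mathrm{soc}$ denotes the socle (product of all minimal normal subgroups). *)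

theory Defs
  imports "HOL-Algebra.Generated_Groups" "HOL-Algebra.Coset" "HOL-Combinatorics.Permutations"
begin

text \<open>The Hamming graph H(m,2) with coordinate set M: a vertex (vector of F_2^M) is
  identified with its support, a subset of M; vector addition is symmetric difference.\<close>

definition vertices :: "'a set \<Rightarrow> 'a set set" where
  "vertices M = Pow M"

definition symdiff :: "'a set \<Rightarrow> 'a set \<Rightarrow> 'a set" where
  "symdiff x y = (x - y) \<union> (y - x)"

definition hdist :: "'a set \<Rightarrow> 'a set \<Rightarrow> nat" where
  "hdist x y = card (symdiff x y)"

definition dist_code :: "'a set set \<Rightarrow> 'a set \<Rightarrow> nat" where
  "dist_code C \<alpha> = Min (hdist \<alpha> ` C)"

definition code_layer :: "'a set \<Rightarrow> 'a set set \<Rightarrow> nat \<Rightarrow> 'a set set" where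
  "code_layer M C i = {\<alpha> \<in> vertices M. dist_code C \<alpha> = i}"

definition covering_radius :: "'a set \<Rightarrow> 'a set set \<Rightarrow> nat" where
  "covering_radius M C = Max (dist_code C ` vertices M)"

definition min_distance_ge :: "'a set set \<Rightarrow> nat \<Rightarrow> bool" where
  "min_distance_ge C \<delta> \<longleftrightarrow> (\<forall>x\<in>C. \<forall>y\<in>C. x \<noteq> y \<longrightarrow> \<delta> \<le> hdist x y)"

text \<open>Automorphisms of H(m,2): B \<rtimes> L. An element is a pair (b, \<sigma>) with b a translation
  vector and \<sigma> a permutation of M, acting by x \<mapsto> \<sigma>(x) + b.\<close>
definition aut_act :: "'a set \<times> ('a \<Rightarrow> 'a) \<Rightarrow> 'a set \<Rightarrow> 'a set" where
  "aut_act g x = symdiff (fst g) (snd g ` x)"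

definition AutH :: "'a set \<Rightarrow> ('a set \<times> ('a \<Rightarrow> 'a)) set" where
  "AutH M = {(b, \<sigma>). b \<subseteq> M \<and> \<sigma> permutes M}"

definition TransH :: "'a set \<Rightarrow> ('a set \<times> ('a \<Rightarrow> 'a)) set" where
  "TransH M = {(b, \<sigma>). b \<subseteq> M \<and> \<sigma> = id}"

definition AutC :: "'a set \<Rightarrow> 'a set set \<Rightarrow> ('a set \<times> ('a \<Rightarrow> 'a)) set" where
  "AutC M C = {g \<in> AutH M. aut_act g ` C = C}"

definition transitive_on :: "('a set \<times> ('a \<Rightarrow> 'a)) set \<Rightarrow> 'a set set \<Rightarrow> bool" where
  "transitive_on G S \<longleftrightarrow> (\<forall>x\<in>S. \<forall>y\<in>S. \<exists>g\<in>G. aut_act g x = y)"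

definition completely_transitive :: "'a set \<Rightarrow> 'a set set \<Rightarrow> bool" where
  "completely_transitive M C \<longleftrightarrow>
     (\<forall>i \<le> covering_radius M C. transitive_on (AutC M C) (code_layer M C i))"

definition linear_code :: "'a set \<Rightarrow> 'a set set \<Rightarrow> bool" where
  "linear_code M D \<longleftrightarrow> D \<subseteq> vertices M \<and> {} \<in> D \<and> (\<forall>x\<in>D. \<forall>y\<in>D. symdiff x y \<in> D)"

definition code_dim :: "'a set set \<Rightarrow> nat" where
  "code_dim D = (THE k. card D = 2 ^ k)"

definition transl_group :: "'a set set \<Rightarrow> ('a set \<times> ('a \<Rightarrow> 'a)) set" where
  "transl_group D = {(d, id) | d. d \<in> D}"

definition admissible_linear_subcode :: "'a set \<Rightarrow> 'a set set \<Rightarrow> 'a set set \<Rightarrow> bool" where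
  "admissible_linear_subcode M C D \<longleftrightarrow>
     linear_code M D \<and> D \<subseteq> C \<and> transl_group D \<subseteq> AutC M C"

definition is_max_linear_subcode :: "'a set \<Rightarrow> 'a set set \<Rightarrow> 'a set set \<Rightarrow> bool" where
  "is_max_linear_subcode M C D \<longleftrightarrow>
     admissible_linear_subcode M C D \<and>
     (\<forall>D'. admissible_linear_subcode M C D' \<longrightarrow> D' \<subseteq> D)"

text \<open>X/K as a permutation group on M: the image of X under the action on coordinates
  (K = X \<inter> B is exactly the kernel of this action).\<close>
definition induced_perm_group :: "('a set \<times> ('a \<Rightarrow> 'a)) set \<Rightarrow> ('a \<Rightarrow> 'a) set" where
  "induced_perm_group X = snd ` X"

definition perm_grp :: "('a \<Rightarrow> 'a) set \<Rightarrow> ('a \<Rightarrow> 'a) monoid" where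
  "perm_grp P = \<lparr>carrier = P, monoid.mult = (\<circ>), one = id\<rparr>"

definition minimal_normal :: "('g, 'b) monoid_scheme \<Rightarrow> 'g set \<Rightarrow> bool" where
  "minimal_normal G N \<longleftrightarrow> N \<lhd> G \<and> N \<noteq> {\<one>\<^bsub>G\<^esub>} \<and>
     (\<forall>N'. N' \<lhd> G \<longrightarrow> N' \<subseteq> N \<longrightarrow> N' = {\<one>\<^bsub>G\<^esub>} \<or> N' = N)"

definition socle :: "('g, 'b) monoid_scheme \<Rightarrow> 'g set" where
  "socle G = generate G (\<Union>{N. minimal_normal G N})"

definition Alt :: "'a set \<Rightarrow> ('a \<Rightarrow> 'a) set" where
  "Alt M = {\<sigma>. \<sigma> permutes M \<and> evenperm \<sigma>}"

end

theory Submission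
  imports Defs
begin

lemma inj_symdiff: "inj f \<Longrightarrow> f ` symdiff A B = symdiff (f ` A) (f ` B)"
  unfolding symdiff_def by (simp add: image_Un image_set_diff)

lemma symdiff_assoc: "symdiff (symdiff a b) c = symdiff a (symdiff b c)"
  unfolding symdiff_def by blast

lemma symdiff_comm: "symdiff a b = symdiff b a"
  unfolding symdiff_def by blast

lemma symdiff_self: "symdiff a (symdiff a b) = b"
  unfolding symdiff_def by blast

lemma act_comp:
  assumes "\<sigma>1 permutes M"
  shows "aut_act (symdiff b1 (\<sigma>1`b2), \<sigma>1\<circ>\<sigma>2) z = aut_act (b1,\<sigma>1) (aut_act (b2,\<sigma>2) z)"
  using permutes_inj[OF assms]
  by (simp add: aut_act_def inj_symdiff symdiff_assoc image_comp)

lemma act_inv: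
  assumes "\<sigma> permutes M"
  shows "aut_act (inv_into UNIV \<sigma> ` b, inv_into UNIV \<sigma>) (aut_act (b,\<sigma>) z) = z"
proof -
  have i: "inj (inv_into UNIV \<sigma>)" using permutes_inj[OF permutes_inv[OF assms]] .
  have "inv_into UNIV \<sigma> ` \<sigma> ` z = z" using permutes_inv_o(2)[OF assms] by (simp add: image_comp)
  then show ?thesis using i by (simp add: aut_act_def inj_symdiff symdiff_self)
qed

lemma grp:
  "group (perm_grp (snd ` AutC M C))"
proof (rule groupI)
  fix x y assume "x \<in> carrier (perm_grp (snd ` AutC M C))" "y \<in> carrier (perm_grp (snd ` AutC M C))"
  then obtain b1 b2 where x: "(b1,x) \<in> AutC M C" and y: "(b2,y) \<in> AutC M C"
    by (auto simp: perm_grp_def)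
  have xp: "x permutes M" and b1: "b1 \<subseteq> M" using x by (auto simp: AutC_def AutH_def)
  have yp: "y permutes M" and b2: "b2 \<subseteq> M" using y by (auto simp: AutC_def AutH_def)
  have "(symdiff b1 (x`b2), x\<circ>y) \<in> AutC M C"
  proof -
    have "aut_act (symdiff b1 (x`b2), x\<circ>y) ` C = aut_act (b1,x) ` aut_act (b2,y) ` C"
      unfolding image_image by (rule image_cong[OF refl], rule act_comp[OF xp])
    also have "\<dots> = C" using x y by (simp add: AutC_def)
    finally show ?thesis
      using xp yp b1 b2 permutes_compose[OF yp xp] permutes_image[OF xp] image_mono[OF b2, of x]
      by (auto simp: AutC_def AutH_def symdiff_def)
  qed
  then show "x \<otimes>\<^bsub>perm_grp (snd ` AutC M C)\<^esub> y \<in> carrier (perm_grp (snd ` AutC M C))"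
    by (force simp: perm_grp_def)
next
  have "({}, id) \<in> AutC M C"
    by (auto simp: AutC_def AutH_def aut_act_def symdiff_def permutes_id)
  then show "\<one>\<^bsub>perm_grp (snd ` AutC M C)\<^esub> \<in> carrier (perm_grp (snd ` AutC M C))"
    by (force simp: perm_grp_def)
next
  fix x y z show "x \<otimes>\<^bsub>perm_grp (snd ` AutC M C)\<^esub> y \<otimes>\<^bsub>perm_grp (snd ` AutC M C)\<^esub> z =
       x \<otimes>\<^bsub>perm_grp (snd ` AutC M C)\<^esub> (y \<otimes>\<^bsub>perm_grp (snd ` AutC M C)\<^esub> z)"
    by (simp add: perm_grp_def comp_assoc)
next
  fix x show "\<one>\<^bsub>perm_grp (snd ` AutC M C)\<^esub> \<otimes>\<^bsub>perm_grp (snd ` AutC M C)\<^esub> x = x"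
    by (simp add: perm_grp_def)
next
  fix x assume "x \<in> carrier (perm_grp (snd ` AutC M C))"
  then obtain b where x: "(b,x) \<in> AutC M C" by (auto simp: perm_grp_def)
  have xp: "x permutes M" and b: "b \<subseteq> M" using x by (auto simp: AutC_def AutH_def)
  have ip: "inv_into UNIV x permutes M" using permutes_inv[OF xp] .
  have "aut_act (inv_into UNIV x ` b, inv_into UNIV x) ` C = aut_act (inv_into UNIV x ` b, inv_into UNIV x) ` aut_act (b,x) ` C"
    using x by (simp add: AutC_def)
  also have "\<dots> = C" by (simp add: image_comp comp_def act_inv[OF xp])
  finally have "(inv_into UNIV x ` b, inv_into UNIV x) \<in> AutC M C"
    using ip b permutes_image[OF ip] image_mono[OF b, of "inv_into UNIV x"] by (auto simp: AutC_def AutH_def)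
  show "\<exists>y\<in>carrier (perm_grp (snd ` AutC M C)). y \<otimes>\<^bsub>perm_grp (snd ` AutC M C)\<^esub> x = \<one>\<^bsub>perm_grp (snd ` AutC M C)\<^esub>"
  proof (rule bexI[of _ "inv_into UNIV x"])
    show "inv_into UNIV x \<otimes>\<^bsub>perm_grp (snd ` AutC M C)\<^esub> x = \<one>\<^bsub>perm_grp (snd ` AutC M C)\<^esub>"
      using permutes_inv_o(2)[OF xp] by (simp add: perm_grp_def)
    show "inv_into UNIV x \<in> carrier (perm_grp (snd ` AutC M C))"
      using \<open>(inv_into UNIV x ` b, inv_into UNIV x) \<in> AutC M C\<close> by (force simp: perm_grp_def)
  qed
qed

lemma invariance:
  assumes mx: "is_max_linear_subcode M C Cmax" and g: "(b,\<sigma>) \<in> AutC M C" and d: "d \<in> Cmax"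
  shows "\<sigma> ` d \<in> Cmax"
proof -
  have sp: "\<sigma> permutes M" and gC: "aut_act (b,\<sigma>) ` C = C" using g by (auto simp: AutC_def AutH_def)
  have inj: "inj \<sigma>" using permutes_inj[OF sp] .
  have adm: "admissible_linear_subcode M C Cmax" using mx by (simp add: is_max_linear_subcode_def)
  have lin: "linear_code M Cmax" and sub: "Cmax \<subseteq> C" and tr: "transl_group Cmax \<subseteq> AutC M C"
    using adm by (auto simp: admissible_linear_subcode_def)
  have key: "symdiff (\<sigma> ` e) ` C = C \<and> \<sigma> ` e \<in> C \<and> \<sigma> ` e \<subseteq> M" if e: "e \<in> Cmax" for e
  proof -
    have "(e, id) \<in> AutC M C" using tr e by (auto simp: transl_group_def)
    then have eC: "symdiff e ` C = C" and eM: "e \<subseteq> M" by (auto simp: AutC_def AutH_def aut_act_def)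
    have comm: "symdiff (\<sigma>`e) (aut_act (b,\<sigma>) z) = aut_act (b,\<sigma>) (symdiff e z)" for z
      using inj by (simp add: aut_act_def inj_symdiff) (metis symdiff_assoc symdiff_comm)
    have "symdiff (\<sigma> ` e) ` C = symdiff (\<sigma> ` e) ` aut_act (b,\<sigma>) ` C" using gC by simp
    also have "\<dots> = aut_act (b,\<sigma>) ` symdiff e ` C" unfolding image_image comm ..
    also have "\<dots> = C" using eC gC by simp
    finally have 1: "symdiff (\<sigma> ` e) ` C = C" .
    have "symdiff (\<sigma> ` e) {} \<in> C" using 1 assms(1) adm lin
      by (metis imageI linear_code_def subsetD sub)
    then have 2: "\<sigma> ` e \<in> C" by (simp add: symdiff_def)
    have 3: "\<sigma> ` e \<subseteq> M" using eM permutes_image[OF sp] by blast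
    show ?thesis using 1 2 3 by blast
  qed
  have "admissible_linear_subcode M C ((`) \<sigma> ` Cmax)"
    unfolding admissible_linear_subcode_def
  proof (intro conjI)
    show "linear_code M ((`) \<sigma> ` Cmax)"
      unfolding linear_code_def
    proof (intro conjI ballI)
      show "(`) \<sigma> ` Cmax \<subseteq> vertices M" using key by (auto simp: vertices_def)
      show "{} \<in> (`) \<sigma> ` Cmax" using lin by (auto simp: linear_code_def image_iff intro!: bexI[of _ "{}"])
      fix x y assume "x \<in> (`) \<sigma> ` Cmax" "y \<in> (`) \<sigma> ` Cmax"
      then obtain x' y' where "x' \<in> Cmax" "y' \<in> Cmax" "x = \<sigma> ` x'" "y = \<sigma> ` y'" by auto
      then show "symdiff x y \<in> (`) \<sigma> ` Cmax" using lin inj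
        by (auto simp: linear_code_def inj_symdiff[symmetric])
    qed
    show "(`) \<sigma> ` Cmax \<subseteq> C" using key by auto
    show "transl_group ((`) \<sigma> ` Cmax) \<subseteq> AutC M C"
    proof
      fix t assume "t \<in> transl_group ((`) \<sigma> ` Cmax)"
      then obtain e where e: "e \<in> Cmax" and t: "t = (\<sigma> ` e, id)" by (auto simp: transl_group_def)
      show "t \<in> AutC M C" using key[OF e] by (simp add: t AutC_def AutH_def aut_act_def permutes_id)
    qed
  qed
  then have "(`) \<sigma> ` Cmax \<subseteq> Cmax" using mx by (simp add: is_max_linear_subcode_def)
  then show ?thesis using d by blast
qed

theorem lemma4p1:
  fixes M :: "'a set" and C Cmax :: "'a set set"
  assumes "finite M"
    and "C \<subseteq> vertices M"
    and "{} \<in> C"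
    and "completely_transitive M C"
    and "min_distance_ge C 5"
    and "is_max_linear_subcode M C Cmax"
    and "2 \<le> code_dim Cmax" and "code_dim Cmax \<le> card M - 2"
  shows "socle (perm_grp (induced_perm_group (AutC M C))) \<noteq> Alt M"
proof
  assume soc: "socle (perm_grp (induced_perm_group (AutC M C))) = Alt M"
  let ?G = "perm_grp (snd ` AutC M C)"
  interpret G: group ?G by (rule grp)
  have "\<Union>{N. minimal_normal ?G N} \<subseteq> carrier ?G"
    by (auto simp: minimal_normal_def dest!: normal_imp_subgroup subgroup.subset)
  then have "socle ?G \<subseteq> carrier ?G" unfolding socle_def by (rule G.generate_incl)
  then have altP: "Alt M \<subseteq> snd ` AutC M C" using soc by (simp add: induced_perm_group_def perm_grp_def)
  have inv: "\<sigma> ` d \<in> Cmax" if sa: "\<sigma> \<in> Alt M" and da: "d \<in> Cmax" for \<sigma> d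
  proof -
    obtain b where "(b,\<sigma>) \<in> AutC M C" using altP sa by force
    then show ?thesis using invariance[OF assms(6) _ da] by blast
  qed
  have adm: "admissible_linear_subcode M C Cmax" using assms(6) by (simp add: is_max_linear_subcode_def)
  have lin: "linear_code M Cmax" and sub: "Cmax \<subseteq> C"
    using adm by (auto simp: admissible_linear_subcode_def)
  show False
  proof (cases "\<forall>x\<in>Cmax. x = {} \<or> x = M")
    case True
    have e: "{} \<in> Cmax" using lin by (simp add: linear_code_def)
    have "Cmax = {{}} \<or> (Cmax = {{}, M} \<and> M \<noteq> {})" using True e by blast
    then have "code_dim Cmax \<le> 1"
    proof
      assume "Cmax = {{}}"
      then have c: "card Cmax = 1" by simp
      have "code_dim Cmax = 0" unfolding code_dim_def c
      proof (rule the_equality)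
        fix k :: nat assume "1 = (2::nat) ^ k"
        then show "k = 0" by (cases k) auto
      qed simp
      then show ?thesis by simp
    next
      assume h: "Cmax = {{}, M} \<and> M \<noteq> {}"
      then have c: "card Cmax = 2" unfolding card_2_iff by blast
      have "code_dim Cmax = 1" unfolding code_dim_def c
      proof (rule the_equality)
        fix k :: nat assume "2 = (2::nat) ^ k"
        then show "k = 1" by (cases k) auto
      qed simp
      then show ?thesis by simp
    qed
    then show False using assms(7) by simp
  next
    case False
    then obtain x where x: "x \<in> Cmax" "x \<noteq> {}" "x \<noteq> M" by blast
    have xM: "x \<subseteq> M" using x(1) lin by (auto simp: linear_code_def vertices_def)
    have fx: "finite x" using xM assms(1) finite_subset by blast
    have "5 \<le> hdist x {}" using assms(5) x sub assms(3) by (auto simp: min_distance_ge_def)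
    then have cx: "5 \<le> card x" by (simp add: hdist_def symdiff_def)
    obtain i where i: "i \<in> x" using x(2) by blast
    obtain j where j: "j \<in> M" "j \<notin> x" using x(3) xM by blast
    have "card (x - {i}) \<ge> 4" using cx i fx by simp
    then obtain k where k: "k \<in> x" "k \<noteq> i" by (metis Diff_iff card.empty ex_in_conv insertI1 not_numeral_le_zero)
    have "card (x - {i} - {k}) \<ge> 3" using cx i k fx by simp
    then obtain l where l: "l \<in> x" "l \<noteq> i" "l \<noteq> k" by (metis Diff_iff card.empty ex_in_conv insertI1 not_numeral_le_zero)
    define \<sigma> where "\<sigma> = transpose i j \<circ> transpose k l"
    have ij: "i \<noteq> j" using i j by blast
    have jk: "j \<noteq> k" "j \<noteq> l" using j k l by auto
    have "\<sigma> permutes M" unfolding \<sigma>_def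
      using i j k l xM by (intro permutes_compose permutes_swap_id) auto
    moreover have "evenperm \<sigma>" unfolding \<sigma>_def
      using ij l(3) by (simp add: evenperm_comp permutation_swap_id evenperm_swap)
    ultimately have "\<sigma> \<in> Alt M" by (simp add: Alt_def)
    then have sx: "\<sigma> ` x \<in> Cmax" using inv x(1) by blast
    have "\<sigma> ` x = (x - {i}) \<union> {j}"
    proof
      show "\<sigma> ` x \<subseteq> (x - {i}) \<union> {j}"
        using i j k l ij jk by (auto simp: \<sigma>_def transpose_def)
      show "(x - {i}) \<union> {j} \<subseteq> \<sigma> ` x"
      proof
        fix y assume y: "y \<in> (x - {i}) \<union> {j}"
        have "\<sigma> (\<sigma> y) = y" unfolding \<sigma>_def using ij jk k l i j
          by (auto simp: transpose_def)
        moreover have "\<sigma> y \<in> x" using y i j k l ij jk by (auto simp: \<sigma>_def transpose_def)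
        ultimately show "y \<in> \<sigma> ` x" by (metis imageI)
      qed
    qed
    then have "symdiff x (\<sigma> ` x) = {i, j}" using i j by (auto simp: symdiff_def)
    then have "{i,j} \<in> Cmax" using lin x(1) sx by (metis linear_code_def)
    then have "5 \<le> hdist {i,j} {}" using assms(5) sub assms(3) by (auto simp: min_distance_ge_def)
    then show False using ij by (simp add: hdist_def symdiff_def)
  qed
qed

end
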